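(* Let $X$ be a uniform space equipped with a uniformly continuous and expansive action of a group $\Gamma$, and let $f \colon X \to X$ be a uniformly continuous and $\Gamma$-equivariant map. Suppose that $Y$ is a subset of $X$ such that the restriction of $f$ to $Y$ is a uniform embedding. Then there exists an entourage $V$ of $X$ with the following property: if $Z$ is a $\Gamma$-invariant subset of $X$ such that $Z \subset V[Y]$, then the restriction of $f$ to $Z$ is injective.
   Context: For $V \subset X \times X$ and $A \subset X$, $V[A] = \{x \in X : (x,a) \in V \text{ for some } a \in A\}$. An action of $\Gamma$ on a uniform space $X$ is uniformly continuous if each map $x \mapsto \gamma x$ is uniformly continuous; it is expansive if there is an entourage $W_0$ of $X$ such that for any two distinct $x,y \in X$ there is $\gamma \in \Gamma$ with $(\gamma x,\gamma y) \notin W_0$. A map $f$ restricted to $Y$ is a uniform embedding if it is injective on $Y$ and induces a uniform isomorphism from $Y$ onto $f(Y)$ (with the induced uniform structures). *)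

theory Defs
  imports "HOL-Analysis.Analysis" "HOL-Algebra.Group_Action"
begin

definition entourage :: "('a::uniform_space \<times> 'a) set \<Rightarrow> bool" where
  "entourage V \<longleftrightarrow> eventually (\<lambda>p. p \<in> V) uniformity"

definition rel_image :: "('a \<times> 'a) set \<Rightarrow> 'a set \<Rightarrow> 'a set" where
  "rel_image V A = {x. \<exists>a\<in>A. (x, a) \<in> V}"

definition uniform_embedding_on :: "'a::uniform_space set \<Rightarrow> ('a \<Rightarrow> 'b::uniform_space) \<Rightarrow> bool" where
  "uniform_embedding_on Y f \<longleftrightarrow> inj_on f Y \<and> uniformly_continuous_on Y f
     \<and> uniformly_continuous_on (f ` Y) (the_inv_into Y f)"

definition expansive_action :: "('g, 'b) monoid_scheme \<Rightarrow> ('g \<Rightarrow> 'a::uniform_space \<Rightarrow> 'a) \<Rightarrow> bool" where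
  "expansive_action G \<phi> \<longleftrightarrow> (\<exists>W0. entourage W0 \<and>
     (\<forall>x y. x \<noteq> y \<longrightarrow> (\<exists>\<gamma>\<in>carrier G. (\<phi> \<gamma> x, \<phi> \<gamma> y) \<notin> W0)))"

end

theory Submission
  imports Defs
begin

theorem theorem4p1:
  fixes G :: "('g, 'b) monoid_scheme"
    and \<phi> :: "'g \<Rightarrow> 'a::uniform_space \<Rightarrow> 'a"
    and f :: "'a \<Rightarrow> 'a"
    and Y :: "'a set"
  assumes act: "group_action G (UNIV :: 'a set) \<phi>"
    and act_uc: "\<And>\<gamma>. \<gamma> \<in> carrier G \<Longrightarrow> uniformly_continuous_on UNIV (\<phi> \<gamma>)"
    and expansive: "expansive_action G \<phi>"
    and f_uc: "uniformly_continuous_on UNIV f"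
    and f_equiv: "\<And>\<gamma> x. \<gamma> \<in> carrier G \<Longrightarrow> f (\<phi> \<gamma> x) = \<phi> \<gamma> (f x)"
    and emb: "uniform_embedding_on Y f"
  shows "\<exists>V. entourage V \<and>
           (\<forall>Z. (\<forall>\<gamma>\<in>carrier G. \<phi> \<gamma> ` Z \<subseteq> Z) \<and> Z \<subseteq> rel_image V Y \<longrightarrow> inj_on f Z)"
proof -
  obtain W0 where W0: "entourage W0"
    and exp: "\<And>x y. x \<noteq> y \<Longrightarrow> \<exists>\<gamma>\<in>carrier G. (\<phi> \<gamma> x, \<phi> \<gamma> y) \<notin> W0"
    using expansive unfolding expansive_action_def by blast
  have "eventually (\<lambda>p. p \<in> W0) uniformity" using W0 unfolding entourage_def .
  then obtain D1 where D1: "eventually D1 uniformity"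
    and D1t: "\<And>x y z. D1 (x, y) \<Longrightarrow> D1 (y, z) \<Longrightarrow> (x, z) \<in> W0"
    by (rule uniformity_transE) blast
  obtain W1 where W1: "eventually W1 uniformity"
    and W1t: "\<And>x y z. W1 (x, y) \<Longrightarrow> W1 (y, z) \<Longrightarrow> D1 (x, z)"
    using D1 by (rule uniformity_transE) blast
  have W1refl: "W1 (x, x)" for x using W1 by (rule uniformity_refl)
  have W3: "W1 (a, b) \<Longrightarrow> W1 (b, c) \<Longrightarrow> W1 (c, d) \<Longrightarrow> (a, d) \<in> W0" for a b c d
    by (metis D1t W1refl W1t)
  define g where "g = the_inv_into Y f"
  have injY: "inj_on f Y" and gu: "uniformly_continuous_on (f ` Y) g"
    using emb unfolding uniform_embedding_on_def g_def by auto
  have EU: "eventually (\<lambda>(u, v). u \<in> f ` Y \<longrightarrow> v \<in> f ` Y \<longrightarrow> W1 (g u, g v)) uniformity"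
    using uniformly_continuous_onD[OF gu W1] .
  then obtain D3 where D3: "eventually D3 uniformity"
    and D3t: "\<And>x y z. D3 (x, y) \<Longrightarrow> D3 (y, z) \<Longrightarrow>
        (x \<in> f ` Y \<longrightarrow> z \<in> f ` Y \<longrightarrow> W1 (g x, g z))"
    by (rule uniformity_transE) auto
  have Ef: "eventually (\<lambda>(x, y). D3 (f x, f y)) uniformity"
    using uniformly_continuous_onD[OF f_uc D3] by simp
  define V where "V = {p. W1 p \<and> W1 (snd p, fst p) \<and> (case p of (x, y) \<Rightarrow> D3 (f x, f y))
     \<and> D3 (f (snd p), f (fst p))}"
  have "entourage V"
    unfolding entourage_def V_def
  proof -
    have "eventually (\<lambda>p. W1 p \<and> W1 (snd p, fst p) \<and> (case p of (x, y) \<Rightarrow> D3 (f x, f y))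
     \<and> D3 (f (snd p), f (fst p))) uniformity"
      using W1 uniformity_sym[OF W1] Ef uniformity_sym[OF Ef]
      by (intro eventually_conj) (auto simp: split_beta')
    then show "eventually (\<lambda>p. p \<in> {p. W1 p \<and> W1 (snd p, fst p) \<and> (case p of (x, y) \<Rightarrow> D3 (f x, f y))
     \<and> D3 (f (snd p), f (fst p))}) uniformity" by simp
  qed
  moreover have "inj_on f Z" if inv: "\<forall>\<gamma>\<in>carrier G. \<phi> \<gamma> ` Z \<subseteq> Z" and ZV: "Z \<subseteq> rel_image V Y" for Z
  proof (rule inj_onI, rule ccontr)
    fix x x' assume xZ: "x \<in> Z" and x'Z: "x' \<in> Z" and fe: "f x = f x'" and ne: "x \<noteq> x'"
    obtain \<gamma> where \<gamma>: "\<gamma> \<in> carrier G" and nW: "(\<phi> \<gamma> x, \<phi> \<gamma> x') \<notin> W0"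
      using exp[OF ne] by blast
    have "\<phi> \<gamma> x \<in> Z" "\<phi> \<gamma> x' \<in> Z" using inv \<gamma> xZ x'Z by auto
    then obtain y y' where y: "y \<in> Y" "(\<phi> \<gamma> x, y) \<in> V" and y': "y' \<in> Y" "(\<phi> \<gamma> x', y') \<in> V"
      using ZV unfolding rel_image_def by blast
    have feq: "f (\<phi> \<gamma> x) = f (\<phi> \<gamma> x')" using f_equiv[OF \<gamma>] fe by simp
    have "D3 (f y, f (\<phi> \<gamma> x))" "D3 (f (\<phi> \<gamma> x'), f y')" using y y' unfolding V_def by auto
    hence "W1 (g (f y), g (f y'))" using D3t feq y y' by fastforce
    hence "W1 (y, y')" using injY y y' unfolding g_def by (simp add: the_inv_into_f_f)
    moreover have "W1 (\<phi> \<gamma> x, y)" "W1 (y', \<phi> \<gamma> x')" using y y' unfolding V_def by auto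
    ultimately show False using W3 nW by blast
  qed
  ultimately show ?thesis by blast
qed

end
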